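(* There is an absolute constant $C>0$ such that, for diffusive deposition and every configuration $\sigma\in\mathbb N^N$ with $|\sigma|<N/2$, $$P_g(\sigma)\ge\exp\Big(-\frac1N\Big(\sum_{j=1}^N\sigma_j(\sigma_j+1)\Big)\Big(1+C\frac{|\sigma|}{N}\Big)\Big).$$
   Context: Diffusive deposition: for $N\ge2$, $G_N=\{1,\dots,N\}$, a configuration $\sigma\in\mathbb N^N$ gives column heights, $|\sigma|=\sum_i\sigma_i$. Given $\sigma$, an explorer is a walk $(X_n,Z_n)_{n\ge0}$ with $(X_n)$ i.i.d. uniform on $G_N$, $Z_0=\max_i\sigma_i+1$, and $(Z_{n+1}-Z_n)$ i.i.d. uniform on $\{-1,1\}$ independent of $(X_n)$. With $n^*=\inf\{n:Z_n\le\sigma_{X_n}\}$, the hitting site is $(X_{n^*},Z_{n^*})$ and the explorer attaches to column $X_{n^*}$. The explorer hits the ground if $Z_{n^*}=0$; $P_g(\sigma)$ denotes the probability of this event. *)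

theory Defs
  imports "HOL-Probability.Probability"
begin

text \<open>Sites are G_N = {1..N}; a configuration is sigma :: nat => nat, only its values
on {1..N} matter. One step of the explorer draws a pair (X_n, Z_{n+1} - Z_n) with
X_n uniform on {1..N} and the increment uniform on {-1,1}, independently.\<close>

definition step_pmf :: "nat \<Rightarrow> (nat \<times> int) pmf" where
  "step_pmf N = pair_pmf (pmf_of_set {1..N}) (pmf_of_set {-1, 1})"

definition explorer_space :: "nat \<Rightarrow> (nat \<times> int) stream measure" where
  "explorer_space N = stream_space (measure_pmf (step_pmf N))"

definition conf_size :: "nat \<Rightarrow> (nat \<Rightarrow> nat) \<Rightarrow> nat" where
  "conf_size N \<sigma> = (\<Sum>i=1..N. \<sigma> i)"

definition conf_max :: "nat \<Rightarrow> (nat \<Rightarrow> nat) \<Rightarrow> nat" where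
  "conf_max N \<sigma> = Max (\<sigma> ` {1..N})"

definition expl_X :: "(nat \<times> int) stream \<Rightarrow> nat \<Rightarrow> nat" where
  "expl_X s n = fst (s !! n)"

definition expl_Z :: "nat \<Rightarrow> (nat \<Rightarrow> nat) \<Rightarrow> (nat \<times> int) stream \<Rightarrow> nat \<Rightarrow> int" where
  "expl_Z N \<sigma> s n = int (conf_max N \<sigma>) + 1 + (\<Sum>k<n. snd (s !! k))"

definition hits_ground :: "nat \<Rightarrow> (nat \<Rightarrow> nat) \<Rightarrow> (nat \<times> int) stream \<Rightarrow> bool" where
  "hits_ground N \<sigma> s \<longleftrightarrow>
     (\<exists>n. expl_Z N \<sigma> s n \<le> int (\<sigma> (expl_X s n))
        \<and> (\<forall>k<n. expl_Z N \<sigma> s k > int (\<sigma> (expl_X s k)))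
        \<and> expl_Z N \<sigma> s n = 0)"

definition P_g :: "nat \<Rightarrow> (nat \<Rightarrow> nat) \<Rightarrow> real" where
  "P_g N \<sigma> = measure (explorer_space N) {s \<in> space (explorer_space N). hits_ground N \<sigma> s}"

end

theory Submission imports Defs begin

definition zz :: "int \<Rightarrow> (nat \<times> int) stream \<Rightarrow> nat \<Rightarrow> int" where
  "zz z s n = z + (\<Sum>k<n. snd (s !! k))"

definition hg :: "(nat \<Rightarrow> nat) \<Rightarrow> int \<Rightarrow> (nat \<times> int) stream \<Rightarrow> bool" where
  "hg \<sigma> z s \<longleftrightarrow> (\<exists>n. zz z s n \<le> int (\<sigma> (fst (s !! n)))
     \<and> (\<forall>k<n. zz z s k > int (\<sigma> (fst (s !! k)))) \<and> zz z s n = 0)"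

lemma zz_Suc: "zz z (x ## s) (Suc n) = zz (z + snd x) s n"
  unfolding zz_def by (simp only: sum.lessThan_Suc_shift) simp

lemma zz_0[simp]: "zz z s 0 = z" by (simp add: zz_def)

lemma hg_Stream: "hg \<sigma> z (x ## s) \<longleftrightarrow> (if z \<le> int (\<sigma> (fst x)) then z = 0 else hg \<sigma> (z + snd x) s)"
proof (cases "z \<le> int (\<sigma> (fst x))")
  case True
  then show ?thesis unfolding hg_def
    apply auto
    subgoal for n by (cases n) (auto simp: zz_Suc)
    by (rule exI[of _ 0]) auto
next
  case False
  have "hg \<sigma> z (x ## s) \<longleftrightarrow> hg \<sigma> (z + snd x) s"
    unfolding hg_def
  proof
    assume "\<exists>n. zz z (x ## s) n \<le> int (\<sigma> (fst ((x ## s) !! n))) \<and>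
        (\<forall>k<n. int (\<sigma> (fst ((x ## s) !! k))) < zz z (x ## s) k) \<and> zz z (x ## s) n = 0"
    then obtain n where n: "zz z (x ## s) n \<le> int (\<sigma> (fst ((x ## s) !! n)))"
      "\<forall>k<n. int (\<sigma> (fst ((x ## s) !! k))) < zz z (x ## s) k" "zz z (x ## s) n = 0" by blast
    then obtain m where m: "n = Suc m" using False by (cases n) auto
    show "\<exists>n. zz (z + snd x) s n \<le> int (\<sigma> (fst (s !! n))) \<and>
        (\<forall>k<n. int (\<sigma> (fst (s !! k))) < zz (z + snd x) s k) \<and> zz (z + snd x) s n = 0"
    proof (intro exI[of _ m] conjI allI impI)
      show "zz (z + snd x) s m \<le> int (\<sigma> (fst (s !! m)))" using n(1) m by (simp add: zz_Suc)
      show "zz (z + snd x) s m = 0" using n(3) m by (simp add: zz_Suc)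
      fix k assume "k < m"
      then show "int (\<sigma> (fst (s !! k))) < zz (z + snd x) s k"
        using n(2)[rule_format, of "Suc k"] m by (simp add: zz_Suc)
    qed
  next
    assume "\<exists>n. zz (z + snd x) s n \<le> int (\<sigma> (fst (s !! n))) \<and>
        (\<forall>k<n. int (\<sigma> (fst (s !! k))) < zz (z + snd x) s k) \<and> zz (z + snd x) s n = 0"
    then obtain n where n: "zz (z + snd x) s n \<le> int (\<sigma> (fst (s !! n)))"
        "\<forall>k<n. int (\<sigma> (fst (s !! k))) < zz (z + snd x) s k" "zz (z + snd x) s n = 0" by blast
    show "\<exists>n. zz z (x ## s) n \<le> int (\<sigma> (fst ((x ## s) !! n))) \<and>
        (\<forall>k<n. int (\<sigma> (fst ((x ## s) !! k))) < zz z (x ## s) k) \<and> zz z (x ## s) n = 0"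
    proof (intro exI[of _ "Suc n"] conjI allI impI)
      show "zz z (x ## s) (Suc n) \<le> int (\<sigma> (fst ((x ## s) !! Suc n)))" using n(1) by (simp add: zz_Suc)
      show "zz z (x ## s) (Suc n) = 0" using n(3) by (simp add: zz_Suc)
      fix k assume "k < Suc n"
      then show "int (\<sigma> (fst ((x ## s) !! k))) < zz z (x ## s) k"
        using n(2) False by (cases k) (auto simp: zz_Suc)
    qed
  qed
  then show ?thesis using False by simp
qed

lemma stake_pred: "Measurable.pred (stream_space (measure_pmf (p :: (nat \<times> int) pmf))) (\<lambda>s. g (stake n s))"
proof -
  have "stake n \<in> measurable (stream_space (count_space UNIV)) (count_space (UNIV :: (nat \<times> int) list set))"
    by (rule measurable_stake)
  then have "stake n \<in> measurable (stream_space (measure_pmf p)) (count_space (UNIV :: (nat \<times> int) list set))"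
    by (simp add: measurable_cong_sets[OF sets_stream_space_cong[OF sets_measure_pmf_count_space] refl])
  then show ?thesis by (rule measurable_compose) simp
qed

definition Qh :: "(nat \<Rightarrow> nat) \<Rightarrow> int \<Rightarrow> nat \<Rightarrow> (nat \<times> int) list \<Rightarrow> bool" where
  "Qh \<sigma> z n l \<longleftrightarrow> z + (\<Sum>k<n. snd (l ! k)) \<le> int (\<sigma> (fst (l ! n)))
     \<and> (\<forall>k<n. z + (\<Sum>j<k. snd (l ! j)) > int (\<sigma> (fst (l ! k)))) \<and> z + (\<Sum>k<n. snd (l ! k)) = 0"

lemma hg_stake: "hg \<sigma> z s \<longleftrightarrow> (\<exists>n. Qh \<sigma> z n (stake (Suc n) s))"
proof -
  have "Qh \<sigma> z n (stake (Suc n) s) \<longleftrightarrow> (zz z s n \<le> int (\<sigma> (fst (s !! n)))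
     \<and> (\<forall>k<n. zz z s k > int (\<sigma> (fst (s !! k)))) \<and> zz z s n = 0)" for n
  proof -
    have e: "\<And>k. k < Suc n \<Longrightarrow> stake (Suc n) s ! k = s !! k"
      by (rule stake_nth)
    have s1: "\<And>k. k \<le> n \<Longrightarrow> (\<Sum>j<k. snd (stake (Suc n) s ! j)) = (\<Sum>j<k. snd (s !! j))"
      by (intro sum.cong refl) (simp add: e del: stake.simps)
    show ?thesis unfolding Qh_def zz_def using s1 e by (auto simp del: stake.simps)
  qed
  then show ?thesis unfolding hg_def by simp
qed

lemma hg_meas: "Measurable.pred (stream_space (measure_pmf p)) (hg \<sigma> z)"
  unfolding hg_stake by (intro pred_intros_countable allI stake_pred)

definition pz :: "nat \<Rightarrow> (nat \<Rightarrow> nat) \<Rightarrow> int \<Rightarrow> real" where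
  "pz N \<sigma> z = measure (explorer_space N) {s \<in> space (explorer_space N). hg \<sigma> z s}"

lemma pmf_step: "N \<ge> 1 \<Longrightarrow> pmf (step_pmf N) (i, d) = indicator ({1..N} \<times> {-1,1}) (i,d) / (2 * real N)"
  unfolding step_pmf_def pmf_pair by (auto simp: indicator_def)

lemma set_step: "N \<ge> 1 \<Longrightarrow> set_pmf (step_pmf N) = {1..N} \<times> {-1,1}"
  unfolding step_pmf_def by auto

lemma integral_step:
  assumes "N \<ge> 1"
  shows "(\<integral>x. f x \<partial>measure_pmf (step_pmf N)) = (\<Sum>i=1..N. (f (i,-1) + f (i,1)) / 2) / real N"
proof -
  have "(\<integral>x. f x \<partial>measure_pmf (step_pmf N)) = (\<Sum>a\<in>{1..N} \<times> {-1,1}. pmf (step_pmf N) a *\<^sub>R f a)"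
    using assms by (intro integral_measure_pmf) (auto simp: set_step)
  also have "\<dots> = (\<Sum>a\<in>{1..N} \<times> {-1,1::int}. f a / (2 * real N))"
    using assms by (intro sum.cong refl) (auto simp: pmf_step)
  also have "\<dots> = (\<Sum>i=1..N. \<Sum>d\<in>{-1,1::int}. f (i,d) / (2 * real N))"
    by (subst sum.cartesian_product) (simp add: case_prod_beta')
  also have "\<dots> = (\<Sum>i=1..N. (f (i,-1) + f (i,1)) / 2) / real N"
    by (simp add: sum_divide_distrib add_divide_distrib)
  finally show ?thesis .
qed

lemma pz_rec:
  assumes "N \<ge> 1"
  shows "pz N \<sigma> z = (\<Sum>i=1..N. (if z \<le> int (\<sigma> i) then (if z = 0 then 1 else 0)
            else (pz N \<sigma> (z - 1) + pz N \<sigma> (z + 1)) / 2)) / real N"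
proof -
  let ?M = "measure_pmf (step_pmf N)"
  let ?S = "stream_space ?M"
  interpret S: prob_space ?S by (rule prob_space.prob_space_stream_space) (rule prob_space_measure_pmf)
  define g where "g t = (if z \<le> int (\<sigma> (fst t)) then (if z = 0 then 1 else 0) else pz N \<sigma> (z + snd t))" for t
  have gnn: "g t \<ge> 0" for t by (simp add: g_def pz_def)
  have meas: "{x\<in>space ?S. hg \<sigma> z x} \<in> sets ?S" using hg_meas[where p="step_pmf N" and \<sigma>=\<sigma> and z=z] unfolding pred_def .
  have "ennreal (pz N \<sigma> z) = (\<integral>\<^sup>+t. ennreal (measure ?S {x\<in>space ?S. hg \<sigma> z (t ## x)}) \<partial>?M)"
    unfolding pz_def explorer_space_def
    by (rule prob_space.prob_stream_space[OF prob_space_measure_pmf meas])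
  also have "\<dots> = (\<integral>\<^sup>+t. ennreal (g t) \<partial>?M)"
  proof (intro nn_integral_cong)
    fix t
    show "ennreal (measure ?S {x\<in>space ?S. hg \<sigma> z (t ## x)}) = ennreal (g t)"
    proof (cases "z \<le> int (\<sigma> (fst t))")
      case True
      have "{x\<in>space ?S. hg \<sigma> z (t ## x)} = (if z = 0 then space ?S else {})"
        using True by (simp only: hg_Stream if_True) auto
      then show ?thesis using True by (simp add: g_def S.prob_space)
    next
      case False
      have "{x\<in>space ?S. hg \<sigma> z (t ## x)} = {x\<in>space ?S. hg \<sigma> (z + snd t) x}"
        using False by (simp only: hg_Stream if_False)
      then show ?thesis using False by (simp add: g_def pz_def explorer_space_def)
    qed
  qed
  also have "\<dots> = ennreal (\<integral>t. g t \<partial>?M)"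
    by (rule nn_integral_eq_integral) (auto intro!: integrable_measure_pmf_finite AE_I2 simp: set_step[OF assms] gnn)
  finally have "pz N \<sigma> z = (\<integral>t. g t \<partial>?M)"
    by (subst (asm) ennreal_inj) (auto simp: pz_def gnn intro!: integral_nonneg_AE AE_I2)
  also have "\<dots> = (\<Sum>i=1..N. (g (i,-1) + g (i,1)) / 2) / real N"
    by (rule integral_step[OF assms])
  also have "\<dots> = (\<Sum>i=1..N. (if z \<le> int (\<sigma> i) then (if z = 0 then 1 else 0)
            else (pz N \<sigma> (z - 1) + pz N \<sigma> (z + 1)) / 2)) / real N"
    by (intro arg_cong[where f="\<lambda>x. x / real N"] sum.cong refl) (auto simp: g_def)
  finally show ?thesis .
qed



lemma sum_tri: "(\<Sum>z<H. (\<Sum>w\<in>{z..<H}. f w)) = (\<Sum>w<H. (real w + 1) * (f w :: real))"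
proof (induction H)
  case 0 then show ?case by simp
next
  case (Suc H)
  have "(\<Sum>z<Suc H. (\<Sum>w\<in>{z..<Suc H}. f w)) = (\<Sum>z<H. (\<Sum>w\<in>{z..<H}. f w) + f H) + f H"
    by (simp add: sum.distrib algebra_simps)
  also have "\<dots> = (\<Sum>w<H. (real w + 1) * f w) + real H * f H + f H"
    using Suc by (simp add: sum.distrib algebra_simps)
  finally show ?case by (simp add: algebra_simps)
qed

lemma flat_top:
  fixes P :: "nat \<Rightarrow> real"
  assumes bnd: "\<And>n. 0 \<le> P n \<and> P n \<le> 1"
    and rec: "\<And>n. n \<ge> h \<Longrightarrow> P (n+1) = (P n + P (n+2)) / 2"
  shows "P h = P (h+1)"
proof (rule ccontr)
  assume ne: "P h \<noteq> P (h+1)"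
  define d where "d = P (h+1) - P h"
  have dd: "P (h+m+1) - P (h+m) = d" for m
  proof (induction m)
    case 0 then show ?case by (simp add: d_def)
  next
    case (Suc m)
    have "P (h+m+1) = (P (h+m) + P (h+m+2)) / 2" using rec[of "h+m"] by simp
    then show ?case using Suc by (simp add: algebra_simps)
  qed
  have lin: "P (h+m) = P h + real m * d" for m
  proof (induction m)
    case 0 then show ?case by simp
  next
    case (Suc m) then show ?case using dd[of m] by (simp add: algebra_simps)
  qed
  have "d \<noteq> 0" using ne by (simp add: d_def)
  obtain m :: nat where m: "2 / \<bar>d\<bar> < real m" using reals_Archimedean2 by blast
  then have "2 < real m * \<bar>d\<bar>" using \<open>d \<noteq> 0\<close> by (simp add: field_simps)
  moreover have "\<bar>real m * d\<bar> \<le> 1" using lin[of m] bnd[of h] bnd[of "h+m"] by auto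
  ultimately show False by (simp add: abs_mult)
qed

lemma analytic:
  fixes P A :: "nat \<Rightarrow> real" and N :: real
  assumes bnd: "\<And>n. 0 \<le> P n \<and> P n \<le> 1"
    and P0: "P 0 = 1"
    and rec: "\<And>n. P (n+1) = (1 - A (n+1) / N) * (P n + P (n+2)) / 2"
    and A0: "\<And>w. w > h \<Longrightarrow> A w = 0"
    and Ab: "\<And>w. 0 \<le> A w \<and> A w < N"
  shows "P (h+1) \<ge> exp (- (\<Sum>w<h. (real w + 1) * (2 * A (w+1) / (N - A (w+1)))))"
proof -
  define b where "b w = 2 * A (w+1) / (N - A (w+1))" for w
  define E where "E z = (\<Sum>w\<in>{z..<h}. b w)" for z
  have bnn: "b w \<ge> 0" for w using Ab[of "w+1"] by (simp add: b_def)
  have Enn: "E z \<ge> 0" for z unfolding E_def by (intro sum_nonneg bnn)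
  have top: "P h = P (h+1)"
  proof (rule flat_top[OF bnd])
    fix n assume "n \<ge> h"
    then show "P (n+1) = (P n + P (n+2)) / 2" using rec[of n] A0[of "n+1"] by simp
  qed
  have Q: "P z \<le> (1 + E z) * P (z+1)" if "z \<le> h" for z
    using that
  proof (induction z rule: inc_induct)
    case base then show ?case using top by (simp add: E_def)
  next
    case (step n)
    have IH: "P (n+1) \<le> (1 + E (n+1)) * P (n+2)" using step.IH by simp
    let ?q = "1 - A (n+1) / N"
    have Npos: "N > 0" using Ab[of 0] by linarith
    have qpos: "?q > 0" using Ab[of "n+1"] Npos by (simp add: field_simps)
    have Pn: "P n = 2 * P (n+1) / ?q - P (n+2)"
    proof -
      obtain q where q: "?q = q" by blast
      have qp: "q > 0" using qpos q by simp
      have "P (n+1) = q * (P n + P (n+2)) / 2" using rec[of n] q by simp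
      then have "2 * P (n+1) / q = P n + P (n+2)" using qp by (simp add: field_simps)
      then show ?thesis using q by simp
    qed
    have low: "P (n+2) \<ge> P (n+1) * (1 - E (n+1))"
    proof (cases "E (n+1) \<le> 1")
      case True
      have "P (n+1) * (1 - E (n+1)) \<le> (1 + E (n+1)) * P (n+2) * (1 - E (n+1))"
        using IH True by (intro mult_right_mono) auto
      also have "\<dots> = (1 - E (n+1)^2) * P (n+2)" by (simp add: algebra_simps power2_eq_square)
      also have "\<dots> \<le> P (n+2)"
      proof -
        have "E (n+1)^2 * P (n+2) \<ge> 0" using bnd[of "n+2"] by simp
        then show ?thesis by (simp add: left_diff_distrib)
      qed
      finally show ?thesis .
    next
      case False
      then have "P (n+1) * (1 - E (n+1)) \<le> 0" using bnd[of "n+1"] by (simp add: mult_nonneg_nonpos)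
      then show ?thesis using bnd[of "n+2"] by linarith
    qed
    have q2: "2 / ?q = 2 + b n"
      using Ab[of "n+1"] Npos by (simp add: b_def field_simps)
    have En: "E n = b n + E (n+1)" unfolding E_def using step.hyps
      by (simp add: sum.atLeast_Suc_lessThan)
    have "P n \<le> 2 * P (n+1) / ?q - P (n+1) * (1 - E (n+1))" using Pn low by linarith
    also have "2 * P (n+1) / ?q = P (n+1) * (2 / ?q)" by simp
    finally show ?case unfolding q2 En by (simp add: algebra_simps)
  qed
  have prod: "1 \<le> (\<Prod>z<m. (1 + E z)) * P m" if "m \<le> h+1" for m
    using that
  proof (induction m)
    case 0 then show ?case using P0 by simp
  next
    case (Suc m)
    have "1 \<le> (\<Prod>z<m. (1 + E z)) * P m" using Suc by simp
    also have "\<dots> \<le> (\<Prod>z<m. (1 + E z)) * ((1 + E m) * P (m+1))"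
      using Q[of m] Suc.prems by (intro mult_left_mono prod_nonneg) (auto intro: add_nonneg_nonneg Enn)
    finally show ?case by (simp add: mult_ac)
  qed
  have "(\<Prod>z<h+1. (1 + E z)) \<le> (\<Prod>z<h+1. exp (E z))"
    by (intro prod_mono) (auto intro: add_nonneg_nonneg Enn simp: exp_ge_add_one_self add.commute)
  also have "\<dots> = exp (\<Sum>z<h+1. E z)" by (rule exp_sum[symmetric]) simp
  also have "(\<Sum>z<h+1. E z) = (\<Sum>z<h. E z)" by (simp add: E_def)
  also have "\<dots> = (\<Sum>w<h. (real w + 1) * b w)" unfolding E_def by (rule sum_tri)
  finally have pe: "(\<Prod>z<h+1. (1 + E z)) \<le> exp (\<Sum>w<h. (real w + 1) * b w)" .
  have "1 \<le> (\<Prod>z<h+1. (1 + E z)) * P (h+1)" using prod[of "h+1"] by simp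
  also have "\<dots> \<le> exp (\<Sum>w<h. (real w + 1) * b w) * P (h+1)"
    using pe bnd[of "h+1"] by (intro mult_right_mono) auto
  finally have "1 \<le> exp (\<Sum>w<h. (real w + 1) * b w) * P (h+1)" .
  then have "exp (- (\<Sum>w<h. (real w + 1) * b w)) \<le> P (h+1)"
    by (simp add: exp_minus field_simps)
  then show ?thesis by (simp add: b_def)
qed


lemma sum_tri2: "(\<Sum>w<m. 2 * (real w + 1)) = real m * (real m + 1)"
  by (induction m) (auto simp: algebra_simps)

lemma S_identity:
  fixes \<sigma> :: "nat \<Rightarrow> nat"
  assumes le: "\<And>j. j \<in> {1..N} \<Longrightarrow> \<sigma> j \<le> h"
  shows "(\<Sum>w<h. 2 * (real w + 1) * real (card {i\<in>{1..N}. w + 1 \<le> \<sigma> i}))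
       = (\<Sum>j=1..N. real (\<sigma> j) * (real (\<sigma> j) + 1))"
proof -
  have c: "real (card {i\<in>{1..N}. w + 1 \<le> \<sigma> i}) = (\<Sum>j=1..N. if w < \<sigma> j then 1 else 0)" for w
    by (simp add: sum.inter_filter[symmetric] Suc_le_eq)
  have "(\<Sum>w<h. 2 * (real w + 1) * real (card {i\<in>{1..N}. w + 1 \<le> \<sigma> i}))
      = (\<Sum>w<h. \<Sum>j=1..N. if w < \<sigma> j then 2 * (real w + 1) else 0)"
    unfolding c by (simp add: sum_distrib_left if_distrib cong: if_cong)
  also have "\<dots> = (\<Sum>j=1..N. \<Sum>w<h. if w < \<sigma> j then 2 * (real w + 1) else 0)"
    by (rule sum.swap)
  also have "\<dots> = (\<Sum>j=1..N. \<Sum>w<\<sigma> j. 2 * (real w + 1))"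
  proof (rule sum.cong[OF refl])
    fix j assume "j \<in> {1..N}"
    then have "\<sigma> j \<le> h" by (rule le)
    then have "{w\<in>{..<h}. w < \<sigma> j} = {..<\<sigma> j}" by auto
    then show "(\<Sum>w<h. if w < \<sigma> j then 2 * (real w + 1) else 0) = (\<Sum>w<\<sigma> j. 2 * (real w + 1))"
      by (simp add: sum.inter_filter[symmetric])
  qed
  also have "\<dots> = (\<Sum>j=1..N. real (\<sigma> j) * (real (\<sigma> j) + 1))"
    by (rule sum.cong[OF refl]) (rule sum_tri2)
  finally show ?thesis .
qed

lemma frac_bound:
  fixes A s N :: real
  assumes "0 \<le> A" "A \<le> s" "2 * s < N"
  shows "2 * A / (N - A) \<le> (2 * A / N) * (1 + 2 * s / N)"
proof -
  have Np: "N > 0" using assms by linarith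
  have NA: "N - A > 0" using assms by linarith
  have key: "N * N \<le> (N + 2 * s) * (N - A)"
  proof -
    have "N * (2 * s - A) \<ge> N * s" using assms Np by (intro mult_left_mono) auto
    moreover have "N * s \<ge> 2 * s * s" using assms by (intro mult_right_mono) auto
    moreover have "2 * s * s \<ge> 2 * s * A" using assms by (intro mult_left_mono) auto
    ultimately show ?thesis by (simp add: algebra_simps)
  qed
  have "2 * A / (N - A) = 2 * A * (N * N) / (N * N * (N - A))" using Np NA by (simp add: field_simps)
  also have "\<dots> \<le> 2 * A * ((N + 2 * s) * (N - A)) / (N * N * (N - A))"
    using key assms Np NA by (intro divide_right_mono mult_left_mono) auto
  also have "\<dots> = (2 * A / N) * (1 + 2 * s / N)" using Np NA by (simp add: field_simps)
  finally show ?thesis .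
qed

lemma hits_ground_hg: "hits_ground N \<sigma> s = hg \<sigma> (int (conf_max N \<sigma>) + 1) s"
  unfolding hits_ground_def hg_def zz_def expl_Z_def expl_X_def by simp

lemma pz_bnd: "N \<ge> 1 \<Longrightarrow> 0 \<le> pz N \<sigma> z \<and> pz N \<sigma> z \<le> 1"
proof -
  assume "N \<ge> 1"
  interpret S: prob_space "explorer_space N" unfolding explorer_space_def
    by (rule prob_space.prob_space_stream_space) (rule prob_space_measure_pmf)
  show ?thesis unfolding pz_def by simp
qed

lemma sum_if_card:
  fixes c :: real
  assumes that: "finite I"
  shows "(\<Sum>i\<in>I. if P i then 0 else c) = (real (card I) - real (card {i\<in>I. P i})) * c"
proof -
  have "(\<Sum>i\<in>I. if P i then 0 else c) = (\<Sum>i\<in>I. c - (if P i then c else 0))"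
    by (intro sum.cong) auto
  also have "\<dots> = real (card I) * c - (\<Sum>i\<in>I. if P i then c else 0)"
    using that by (simp add: sum_subtractf)
  also have "(\<Sum>i\<in>I. if P i then c else 0) = (\<Sum>i\<in>{i\<in>I. P i}. c)"
    by (rule sum.inter_filter[symmetric, OF that])
  finally show ?thesis by (simp add: algebra_simps)
qed

theorem lemma2p1:
  shows "\<exists>C::real. C > 0 \<and>
    (\<forall>N::nat. \<forall>\<sigma>::nat \<Rightarrow> nat. N \<ge> 2 \<longrightarrow> real (conf_size N \<sigma>) < real N / 2 \<longrightarrow>
      P_g N \<sigma> \<ge> exp (- (1 / real N) * (\<Sum>j=1..N. real (\<sigma> j) * (real (\<sigma> j) + 1))
                        * (1 + C * real (conf_size N \<sigma>) / real N)))"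
proof (intro exI[of _ 2] conjI allI impI)
  fix N :: nat and \<sigma> :: "nat \<Rightarrow> nat"
  assume N2: "N \<ge> 2" and small: "real (conf_size N \<sigma>) < real N / 2"
  define h where "h = conf_max N \<sigma>"
  define s where "s = real (conf_size N \<sigma>)"
  define P where "P n = pz N \<sigma> (int n)" for n
  define A where "A w = (if w = 0 then 0 else real (card {i\<in>{1..N}. w \<le> \<sigma> i}))" for w
  have N1: "N \<ge> 1" using N2 by simp
  have le_h: "\<sigma> j \<le> h" if "j \<in> {1..N}" for j
    unfolding h_def conf_max_def using that by (intro Max_ge) auto
  have A_s: "A w \<le> s" for w
  proof (cases "w = 0")
    case True then show ?thesis by (simp add: A_def s_def)
  next
    case False
    have "real (card {i\<in>{1..N}. w \<le> \<sigma> i}) = (\<Sum>i\<in>{i\<in>{1..N}. w \<le> \<sigma> i}. 1)" by simp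
    also have "\<dots> \<le> (\<Sum>i\<in>{i\<in>{1..N}. w \<le> \<sigma> i}. real (\<sigma> i))"
      using False by (intro sum_mono) auto
    also have "\<dots> \<le> (\<Sum>i\<in>{1..N}. real (\<sigma> i))"
      by (intro sum_mono2) auto
    finally show ?thesis using False by (simp add: A_def s_def conf_size_def)
  qed
  have s2: "2 * s < real N" using small by (simp add: s_def)
  have s0: "s \<ge> 0" by (simp add: s_def)
  have Ab: "0 \<le> A w \<and> A w < real N" for w using A_s[of w] s2 s0 by (simp add: A_def)
  have bnd: "0 \<le> P n \<and> P n \<le> 1" for n unfolding P_def using pz_bnd[OF N1] .
  have P0: "P 0 = 1"
    using pz_rec[OF N1, of \<sigma> 0] N1 by (simp add: P_def)
  have rec: "P (n+1) = (1 - A (n+1) / real N) * (P n + P (n+2)) / 2" for n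
  proof -
    have "P (n+1) = (\<Sum>i=1..N. (if int (n+1) \<le> int (\<sigma> i) then 0
            else (P n + P (n+2)) / 2)) / real N"
    proof -
      have e1: "pz N \<sigma> (int (n+1) - 1) = P n" by (simp add: P_def)
      have e2: "pz N \<sigma> (int (n+1) + 1) = P (n+2)" by (simp add: P_def add.commute)
      have e3: "int (n+1) \<noteq> 0" by simp
      show ?thesis using pz_rec[OF N1, of \<sigma> "int (n+1)"] unfolding e1 e2 P_def
        using e3 by (simp only: if_False)
    qed
    also have "\<dots> = (real N - A (n+1)) * ((P n + P (n+2)) / 2) / real N"
    proof -
      have "{i\<in>{1..N}. int (n+1) \<le> int (\<sigma> i)} = {i\<in>{1..N}. n+1 \<le> \<sigma> i}"
        by (simp only: of_nat_le_iff)
      then show ?thesis by (simp only: sum_if_card[OF finite_atLeastAtMost]) (simp add: A_def)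
    qed
    also have "\<dots> = (1 - A (n+1) / real N) * (P n + P (n+2)) / 2"
      using N1 by (simp add: field_simps)
    finally show ?thesis .
  qed
  have A0: "A w = 0" if "w > h" for w
  proof -
    have "{i\<in>{1..N}. w \<le> \<sigma> i} = {}" using le_h that by fastforce
    then show ?thesis by (simp add: A_def)
  qed
  have main: "P (h+1) \<ge> exp (- (\<Sum>w<h. (real w + 1) * (2 * A (w+1) / (real N - A (w+1)))))"
    by (rule analytic[OF bnd P0 rec A0 Ab])
  define S where "S = (\<Sum>j=1..N. real (\<sigma> j) * (real (\<sigma> j) + 1))"
  have "(\<Sum>w<h. (real w + 1) * (2 * A (w+1) / (real N - A (w+1))))
      \<le> (\<Sum>w<h. (real w + 1) * ((2 * A (w+1) / real N) * (1 + 2 * s / real N)))"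
    using Ab A_s s2 by (intro sum_mono mult_left_mono frac_bound) auto
  also have "\<dots> = (1 / real N) * (\<Sum>w<h. 2 * (real w + 1) * A (w+1)) * (1 + 2 * s / real N)"
    by (simp add: sum_distrib_left sum_distrib_right sum_divide_distrib)
       (intro sum.cong refl, simp add: algebra_simps add_divide_distrib)
  also have "(\<Sum>w<h. 2 * (real w + 1) * A (w+1)) = S"
    unfolding S_def using S_identity[of N \<sigma> h] le_h by (simp add: A_def)
  finally have sb: "(\<Sum>w<h. (real w + 1) * (2 * A (w+1) / (real N - A (w+1))))
      \<le> 1 / real N * S * (1 + 2 * s / real N)" .
  have "exp (- (1 / real N) * S * (1 + 2 * s / real N))
     \<le> exp (- (\<Sum>w<h. (real w + 1) * (2 * A (w+1) / (real N - A (w+1)))))"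
    unfolding exp_le_cancel_iff using sb by linarith
  then have "exp (- (1 / real N) * S * (1 + 2 * s / real N)) \<le> P (h+1)"
    using main by linarith
  moreover have "P (h+1) = P_g N \<sigma>"
    unfolding P_def P_g_def pz_def h_def hits_ground_hg by (simp add: add.commute)
  ultimately show "P_g N \<sigma> \<ge> exp (- (1 / real N) * (\<Sum>j=1..N. real (\<sigma> j) * (real (\<sigma> j) + 1))
                        * (1 + 2 * real (conf_size N \<sigma>) / real N))"
    by (simp add: S_def s_def)
qed simp

end
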